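(* There is an algorithm that, given an integer $k\ge 1$ and a finite multiset $H$ of $n$ nonnegative integers, decides in $O(n\log n)$ time whether there exists a rooted $k$-ary tree whose multiset of node heights equals $H$.
   Context: A rooted $k$-ary tree is a rooted tree in which every node has at most $k$ children. The height of a leaf is $0$; the height of any other node is one more than the maximum height of its children. The multiset of heights has one entry per node. Running time is measured with arithmetic on the input integers taking unit time. *)

theory Defs
  imports Complex_Main "HOL-Library.Multiset"
begin

datatype tree = Node "tree list"

fun height :: "tree \<Rightarrow> nat" where
  "height (Node ts) = (if ts = [] then 0 else Suc (fold max (map height ts) 0))"

fun kary :: "nat \<Rightarrow> tree \<Rightarrow> bool" where
  "kary k (Node ts) = (length ts \<le> k \<and> (\<forall>t\<in>set ts. kary k t))"

fun heights :: "tree \<Rightarrow> nat multiset" where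
  "heights (Node ts) = add_mset (height (Node ts)) (sum_list (map heights ts))"

definition realizable :: "nat \<Rightarrow> nat multiset \<Rightarrow> bool" where
  "realizable k H \<longleftrightarrow> (\<exists>t. kary k t \<and> heights t = H)"

datatype instr =
    LoadC nat int
  | Add nat nat nat
  | Sub nat nat nat
  | Load nat nat
  | Store nat nat
  | Jz nat nat
  | Jneg nat nat

type_synonym config = "nat \<times> (nat \<Rightarrow> int)"

fun step :: "instr list \<Rightarrow> config \<Rightarrow> config" where
  "step P (pc, m) = (case P ! pc of
      LoadC r c \<Rightarrow> (Suc pc, m(r := c))
    | Add r a b \<Rightarrow> (Suc pc, m(r := m a + m b))
    | Sub r a b \<Rightarrow> (Suc pc, m(r := m a - m b))
    | Load r a \<Rightarrow> (Suc pc, m(r := m (nat (m a))))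
    | Store a r \<Rightarrow> (Suc pc, m(nat (m a) := m r))
    | Jz r j \<Rightarrow> (if m r = 0 then j else Suc pc, m)
    | Jneg r j \<Rightarrow> (if m r < 0 then j else Suc pc, m))"

fun run :: "instr list \<Rightarrow> nat \<Rightarrow> config \<Rightarrow> config" where
  "run P 0 s = s"
| "run P (Suc t) s = (if fst s \<ge> length P then s else run P t (step P s))"

definition halted :: "instr list \<Rightarrow> config \<Rightarrow> bool" where
  "halted P s \<longleftrightarrow> fst s \<ge> length P"

text \<open>Input encoding: cell 0 holds k, cell 1 holds n, cells 2..n+1 hold the
elements of the multiset (listed in an arbitrary order); all other cells are 0.
Output: cell 0 equals 1 on acceptance.\<close>

definition input :: "nat \<Rightarrow> nat list \<Rightarrow> nat \<Rightarrow> int" where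
  "input k hs = (\<lambda>i. if i = 0 then int k
                     else if i = 1 then int (length hs)
                     else if i - 2 < length hs then int (hs ! (i - 2)) else 0)"

end

theory Submission
  imports Defs
begin


lemma fold_max_eq: "fold max xs (a::nat) = Max (insert a (set xs))"
  using Max.set_eq_fold[of a xs, symmetric] by simp

lemma count_sum_list: "count (sum_list xs) x = sum_list (map (\<lambda>M. count M x) xs)"
  by (induction xs) auto

lemma size_sum_list: "size (sum_list (xs::'a multiset list)) = sum_list (map size xs)"
  by (induction xs) (auto simp: size_union)

lemma filter_sum_list: "filter_mset P (sum_list xs) = sum_list (map (filter_mset P) xs)"
  by (induction xs) auto

lemma in_sum_list: "x \<in># sum_list (map f ts) \<longleftrightarrow> (\<exists>t\<in>set ts. x \<in># f t)"
  by (induction ts) auto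

lemma height_Node_Max: "ts \<noteq> [] \<Longrightarrow> height (Node ts) = Suc (Max (height ` set ts))"
proof -
  assume ne: "ts \<noteq> []"
  have "Max (insert 0 (height ` set ts)) = max 0 (Max (height ` set ts))"
    using ne by (subst Max_insert) auto
  thus ?thesis using ne by (simp add: fold_max_eq)
qed

lemma height_child: "t \<in> set ts \<Longrightarrow> height t < height (Node ts)"
proof -
  assume t: "t \<in> set ts"
  hence "height t \<le> Max (height ` set ts)" by (intro Max_ge) auto
  moreover have "ts \<noteq> []" using t by auto
  ultimately show ?thesis using height_Node_Max[of ts] by simp
qed

lemma height_child_ex: "ts \<noteq> [] \<Longrightarrow> \<exists>t\<in>set ts. Suc (height t) = height (Node ts)"
proof -
  assume ne: "ts \<noteq> []"
  have "Max (height ` set ts) \<in> height ` set ts"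
    using ne by (intro Max_in) auto
  thus ?thesis using height_Node_Max[OF ne] by auto
qed

lemma height_Nil[simp]: "height (Node []) = 0" by simp

declare height.simps[simp del]

lemma heights_le: "x \<in># heights t \<Longrightarrow> x \<le> height t"
proof (induction t arbitrary: x)
  case (Node ts)
  show ?case
  proof (cases "x = height (Node ts)")
    case False
    then obtain s where s: "s \<in> set ts" "x \<in># heights s"
      using Node.prems by (auto simp: in_sum_list) 
    thus ?thesis using Node.IH[OF s] height_child[OF s(1)] by simp
  qed simp
qed

lemma count_gt: "height t < x \<Longrightarrow> count (heights t) x = 0"
  using heights_le[of x t] by (auto simp: count_eq_zero_iff)

lemma sum_list_zero: "(\<And>s. s \<in> set ts \<Longrightarrow> f s = (0::nat)) \<Longrightarrow> sum_list (map f ts) = 0"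
  by (induction ts) auto

lemma count_height: "count (heights t) (height t) = 1"
proof (cases t)
  case (Node ts)
  have "sum_list (map (\<lambda>s. count (heights s) (height (Node ts))) ts) = 0"
    by (rule sum_list_zero) (auto intro: count_gt height_child)
  thus ?thesis using Node by (simp add: count_sum_list o_def)
qed

lemma member_le_sum_list: "s \<in> set ts \<Longrightarrow> f s \<le> sum_list (map f ts :: nat list)"
  by (induction ts) auto

lemma N2: "count (heights t) (Suc j) \<le> count (heights t) j"
proof (induction t)
  case (Node ts)
  define h where "h = height (Node ts)"
  show ?case
  proof (cases "ts = []")
    case True thus ?thesis by simp
  next
    case ne: False
    show ?thesis
    proof (cases "Suc j = h")
      case True
      have z: "sum_list (map (\<lambda>s. count (heights s) (Suc j)) ts) = 0"
        by (rule sum_list_zero) (metis True h_def count_gt height_child)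
      obtain s0 where s0: "s0 \<in> set ts" "Suc (height s0) = h"
        using height_child_ex[OF ne] h_def by auto
      have "height s0 = j" using s0 True by simp
      hence "count (heights s0) j = 1" using count_height[of s0] by simp
      hence "1 \<le> sum_list (map (\<lambda>s. count (heights s) j) ts)"
        using member_le_sum_list[OF s0(1), of "\<lambda>s. count (heights s) j"] by simp
      have e1: "count (heights (Node ts)) (Suc j) = 1 + sum_list (map (\<lambda>s. count (heights s) (Suc j)) ts)"
        by (simp add: count_sum_list o_def True h_def)
      have e2: "count (heights (Node ts)) j \<ge> sum_list (map (\<lambda>s. count (heights s) j) ts)"
        by (simp add: count_sum_list o_def)
      show ?thesis using e1 e2 z \<open>1 \<le> _\<close> by linarith
    next
      case False
      have "sum_list (map (\<lambda>s. count (heights s) (Suc j)) ts) \<le> sum_list (map (\<lambda>s. count (heights s) j) ts)"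
        by (rule sum_list_mono) (rule Node.IH)
      thus ?thesis using False by (simp add: count_sum_list o_def h_def)
    qed
  qed
qed

definition above :: "nat multiset \<Rightarrow> nat \<Rightarrow> nat" where
  "above M j = size (filter_mset (\<lambda>x. j < x) M)"

lemma sum_list_int: "int (sum_list (map f ts)) = sum_list (map (\<lambda>x. int (f x)) ts)"
  by (induction ts) auto

lemma sum_list_le_len: "(\<And>s. s \<in> set ts \<Longrightarrow> f s \<le> (1::int)) \<Longrightarrow> sum_list (map f ts) \<le> int (length ts)"
proof (induction ts)
  case (Cons a ts)
  have "f a \<le> 1" using Cons.prems by auto
  moreover have "sum_list (map f ts) \<le> int (length ts)" using Cons by auto
  ultimately show ?case by simp
qed simp

lemma N1: "kary k t \<Longrightarrow> int (count (heights t) j) \<le> 1 + (int k - 1) * int (above (heights t) j)"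
proof (induction t)
  case (Node ts)
  define h where "h = height (Node ts)"
  show ?case
  proof (cases "h \<le> j")
    case True
    have z: "sum_list (map (\<lambda>s. count (heights s) j) ts) = 0"
      by (rule sum_list_zero) (metis True count_gt h_def height_child order.strict_trans2)
    have "count (heights (Node ts)) j \<le> 1" by (simp add: count_sum_list o_def z)
    moreover have "above (heights (Node ts)) j = 0"
      unfolding above_def using True h_def heights_le[of _ "Node ts"] by fastforce
    ultimately show ?thesis by simp
  next
    case False
    have k: "length ts \<le> k" "\<And>s. s \<in> set ts \<Longrightarrow> kary k s" using Node.prems by auto
    have c: "count (heights (Node ts)) j = sum_list (map (\<lambda>s. count (heights s) j) ts)"
      using False by (simp add: count_sum_list o_def h_def)
    have a: "above (heights (Node ts)) j = 1 + sum_list (map (\<lambda>s. above (heights s) j) ts)"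
      using False by (simp add: above_def filter_sum_list size_sum_list o_def h_def)
    have "sum_list (map (\<lambda>s. int (count (heights s) j)) ts) \<le>
          sum_list (map (\<lambda>s. 1 + (int k - 1) * int (above (heights s) j)) ts)"
      by (rule sum_list_mono) (use Node.IH k in auto)
    also have "\<dots> = int (length ts) + (int k - 1) * sum_list (map (\<lambda>s. int (above (heights s) j)) ts)"
      by (induction ts) (auto simp: algebra_simps)
    finally show ?thesis using k(1) c a by (simp add: sum_list_int algebra_simps)
  qed
qed

lemma height_lt_size: "height t < size (heights t)"
proof (induction t)
  case (Node ts)
  show ?case
  proof (cases "ts = []")
    case False
    obtain s0 where s0: "s0 \<in> set ts" "Suc (height s0) = height (Node ts)"
      using height_child_ex[OF False] by auto
    have "size (heights s0) \<le> sum_list (map (\<lambda>s. size (heights s)) ts)"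
      by (rule member_le_sum_list[OF s0(1)])
    thus ?thesis using Node.IH[OF s0(1)] s0(2) by (simp add: size_sum_list o_def)
  qed simp
qed

definition Cond :: "nat \<Rightarrow> nat multiset \<Rightarrow> bool" where
  "Cond k H \<longleftrightarrow> H \<noteq> {#} \<and> (\<forall>x\<in>#H. x < size H) \<and>
     (\<forall>j. int (count H j) \<le> 1 + (int k - 1) * int (above H j)) \<and>
     (\<forall>j. count H (Suc j) \<le> count H j)"

lemma realizable_Cond: "realizable k H \<Longrightarrow> Cond k H"
  unfolding realizable_def Cond_def
proof (elim exE conjE)
  fix t assume kt: "kary k t" and H: "heights t = H"
  have "H \<noteq> {#}" using H by (cases t) auto
  moreover have "\<forall>x\<in>#H. x < size H" using H heights_le[of _ t] height_lt_size[of t] by fastforce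
  ultimately show "H \<noteq> {#} \<and> (\<forall>x\<in>#H. x < size H) \<and>
     (\<forall>j. int (count H j) \<le> 1 + (int k - 1) * int (above H j)) \<and>
     (\<forall>j. count H (Suc j) \<le> count H j)"
    using N1[OF kt] N2[of t] H by auto
qed

fun build :: "nat \<Rightarrow> tree list \<Rightarrow> tree list \<Rightarrow> tree list" where
  "build k [] es = []"
| "build k (m#ms) es = Node (m # take (k-1) es) # build k ms (drop (k-1) es)"

abbreviation hsum :: "tree list \<Rightarrow> nat multiset" where
  "hsum F \<equiv> sum_list (map heights F)"

lemma hsum_mset: "mset F = mset G \<Longrightarrow> hsum F = hsum G"
  by (metis mset_map sum_mset_sum_list)

lemma height_Node_eq: "(\<And>t. t \<in> set ts \<Longrightarrow> height t \<le> j) \<Longrightarrow> m \<in> set ts \<Longrightarrow> height m = j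
   \<Longrightarrow> height (Node ts) = Suc j"
proof -
  assume a: "\<And>t. t \<in> set ts \<Longrightarrow> height t \<le> j" and m: "m \<in> set ts" "height m = j"
  have "Max (height ` set ts) = j"
    by (rule Max_eqI) (use a m in auto)
  moreover have "ts \<noteq> []" using m by auto
  ultimately show ?thesis using height_Node_Max[of ts] by auto
qed

lemma build_props:
  assumes "k \<ge> 1" "\<forall>m\<in>set ms. kary k m \<and> height m = j" "\<forall>e\<in>set es. kary k e \<and> height e \<le> j"
    "length es \<le> (k-1) * length ms"
  shows "length (build k ms es) = length ms \<and> (\<forall>t\<in>set (build k ms es). kary k t \<and> height t = Suc j)
     \<and> hsum (build k ms es) = replicate_mset (length ms) (Suc j) + hsum ms + hsum es"
  using assms(2-4)
proof (induction ms arbitrary: es)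
  case Nil thus ?case by simp
next
  case (Cons m ms)
  have IH: "length (build k ms (drop (k-1) es)) = length ms \<and> (\<forall>t\<in>set (build k ms (drop (k-1) es)). kary k t \<and> height t = Suc j)
     \<and> hsum (build k ms (drop (k-1) es)) = replicate_mset (length ms) (Suc j) + hsum ms + hsum (drop (k-1) es)"
    by (rule Cons.IH) (use Cons.prems in \<open>auto dest: in_set_dropD\<close>)
  have hN: "height (Node (m # take (k-1) es)) = Suc j"
    by (rule height_Node_eq[of _ _ m]) (use Cons.prems in \<open>auto dest: in_set_takeD\<close>)
  have kN: "kary k (Node (m # take (k-1) es))"
    using Cons.prems assms(1) by (auto dest: in_set_takeD)
  have "hsum (take (k-1) es) + hsum (drop (k-1) es) = hsum es"
    by (metis append_take_drop_id map_append sum_list_append)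
  thus ?case using IH hN kN
    by (simp add: algebra_simps)
qed

definition FI :: "nat \<Rightarrow> nat multiset \<Rightarrow> nat \<Rightarrow> tree list \<Rightarrow> bool" where
  "FI k H j F \<longleftrightarrow> (\<forall>t\<in>set F. kary k t \<and> height t \<le> j) \<and> hsum F = filter_mset (\<lambda>x. x \<le> j) H
     \<and> int (length F) \<le> 1 + (int k - 1) * int (above H j)"

lemma sum_list_if_len: "sum_list (map (\<lambda>t. if P t then 1 else 0) F) = length (filter P F)"
  by (induction F) auto

lemma FI_count:
  assumes "FI k H j F" shows "length (filter (\<lambda>t. height t = j) F) = count H j"
proof -
  have "count (hsum F) j = sum_list (map (\<lambda>t. count (heights t) j) F)"
    by (simp add: count_sum_list o_def)
  also have "\<dots> = sum_list (map (\<lambda>t. if height t = j then 1 else 0) F)"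
  proof (rule arg_cong[where f=sum_list], rule map_cong[OF refl])
    fix t assume "t \<in> set F"
    hence "height t \<le> j" using assms by (auto simp: FI_def)
    thus "count (heights t) j = (if height t = j then 1 else 0)"
      using count_height[of t] count_gt[of t j] by auto
  qed
  also have "\<dots> = length (filter (\<lambda>t. height t = j) F)" by (rule sum_list_if_len)
  finally show ?thesis using assms by (simp add: FI_def)
qed

lemma above_Suc: "above H j = count H (Suc j) + above H (Suc j)"
proof -
  have "filter_mset (\<lambda>x. j < x) H = filter_mset (\<lambda>x. x = Suc j) H + filter_mset (\<lambda>x. Suc j < x) H"
    by (rule multiset_eqI) auto
  thus ?thesis unfolding above_def by (simp add: filter_eq_replicate_mset)
qed

lemma filter_Suc: "filter_mset (\<lambda>x. x \<le> Suc j) H = filter_mset (\<lambda>x. x \<le> j) H + replicate_mset (count H (Suc j)) (Suc j)"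
  by (rule multiset_eqI) (auto simp: count_replicate_mset)

lemma FI_step:
  assumes k: "k \<ge> 1" and S1: "int (count H (Suc j)) \<le> 1 + (int k - 1) * int (above H (Suc j))"
    and S2: "count H (Suc j) \<le> count H j" and F: "FI k H j F"
  shows "\<exists>F'. FI k H (Suc j) F'"
proof -
  define Main where "Main = filter (\<lambda>t. height t = j) F"
  define Oth where "Oth = filter (\<lambda>t. height t \<noteq> j) F"
  define p where "p = count H (Suc j)"
  define ms where "ms = take p Main"
  define R where "R = drop p Main @ Oth"
  define e where "e = min (length R) ((k-1)*p)"
  define F' where "F' = build k ms (take e R) @ drop e R"
  have lenMain: "length Main = count H j" using FI_count[OF F] Main_def by simp
  have lms: "length ms = p" using lenMain S2 p_def ms_def by simp
  have msetF: "mset F = mset Main + mset Oth" unfolding Main_def Oth_def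
    by (metis mset_filter multiset_partition)
  have lenF: "length F = length Main + length Oth"
    by (metis msetF size_mset size_union)
  have lenR: "length R = length F - p" using lenF lenMain S2 p_def R_def by simp
  have Fprops: "\<forall>t\<in>set F. kary k t \<and> height t \<le> j" using F by (simp add: FI_def)
  have msp: "\<forall>m\<in>set ms. kary k m \<and> height m = j"
    using Fprops by (auto simp: ms_def Main_def dest: in_set_takeD)
  have Rp: "\<forall>x\<in>set R. kary k x \<and> height x \<le> j"
    using Fprops by (auto simp: R_def Main_def Oth_def dest: in_set_dropD)
  have B: "length (build k ms (take e R)) = length ms \<and> (\<forall>t\<in>set (build k ms (take e R)). kary k t \<and> height t = Suc j)
     \<and> hsum (build k ms (take e R)) = replicate_mset (length ms) (Suc j) + hsum ms + hsum (take e R)"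
    by (rule build_props[OF k msp]) (use Rp lms e_def in \<open>auto dest: in_set_takeD\<close>)
  have "ms @ R = Main @ Oth" unfolding ms_def R_def
    by (simp only: append.assoc[symmetric] append_take_drop_id)
  hence m1: "mset (ms @ R) = mset F" using msetF by simp
  have tdR: "hsum (take e R) + hsum (drop e R) = hsum R"
  proof -
    have "hsum (take e R @ drop e R) = hsum (take e R) + hsum (drop e R)"
      by (simp only: map_append sum_list_append)
    thus ?thesis by simp
  qed
  have "hsum F' = hsum (build k ms (take e R)) + hsum (drop e R)"
    by (simp add: F'_def)
  also have "\<dots> = replicate_mset p (Suc j) + hsum ms + hsum (take e R) + hsum (drop e R)"
    using B lms by simp
  also have "\<dots> = replicate_mset p (Suc j) + (hsum ms + hsum R)"
    by (simp only: tdR[symmetric] add.assoc)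
  also have "\<dots> = replicate_mset p (Suc j) + hsum F" using hsum_mset[OF m1] by simp
  also have "\<dots> = filter_mset (\<lambda>x. x \<le> Suc j) H" using F filter_Suc[of j H] p_def
    by (simp add: FI_def add.commute)
  finally have hs: "hsum F' = filter_mset (\<lambda>x. x \<le> Suc j) H" .
  have pr: "\<forall>t\<in>set F'. kary k t \<and> height t \<le> Suc j"
  proof
    fix t assume "t \<in> set F'"
    hence "t \<in> set (build k ms (take e R)) \<or> t \<in> set R" by (auto simp: F'_def dest: in_set_dropD)
    thus "kary k t \<and> height t \<le> Suc j"
    proof
      assume "t \<in> set (build k ms (take e R))" thus ?thesis using B by simp
    next
      assume "t \<in> set R" thus ?thesis using Rp by (simp add: le_SucI)
    qed
  qed
  have lenF': "length F' = p + (length R - e)" using B lms by (simp add: F'_def)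
  have lenFle: "int (length F) \<le> 1 + (int k - 1) * int (above H j)" using F by (simp add: FI_def)
  have ab: "above H j = p + above H (Suc j)" using above_Suc[of H j] p_def by simp
  have ineq: "int (length F') \<le> 1 + (int k - 1) * int (above H (Suc j))"
  proof (cases "length R \<le> (k-1)*p")
    case True
    hence "length F' = p" using lenF' e_def by simp
    thus ?thesis using S1 p_def by simp
  next
    case False
    hence e: "e = (k-1)*p" using e_def by simp
    have "int (length F') = int (length F) - int (k-1) * int p"
      using lenF' e False lenR by (simp add: of_nat_diff)
    also have "\<dots> \<le> 1 + (int k - 1) * int (above H j) - (int k - 1) * int p"
      using lenFle k by (simp add: of_nat_diff)
    also have "\<dots> = 1 + (int k - 1) * int (above H (Suc j))" using ab by (simp add: algebra_simps)
    finally show ?thesis .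
  qed
  have "FI k H (Suc j) F'" unfolding FI_def using hs pr ineq by simp
  thus ?thesis ..
qed

lemma FI_all:
  assumes k: "k \<ge> 1" and C: "Cond k H" shows "\<exists>F. FI k H j F"
proof (induction j)
  case 0
  define F where "F = replicate (count H 0) (Node [])"
  have rep: "\<And>n. sum_list (replicate n {#0#}) = replicate_mset n (0::nat)"
    by (induct_tac n) auto
  have "hsum F = replicate_mset (count H 0) 0"
    unfolding F_def using rep by simp
  moreover have "filter_mset (\<lambda>x. x \<le> 0) H = replicate_mset (count H 0) 0"
    by (simp add: filter_eq_replicate_mset)
  moreover have "int (length F) \<le> 1 + (int k - 1) * int (above H 0)"
    using C by (simp add: Cond_def F_def)
  moreover have "\<forall>t\<in>set F. kary k t \<and> height t \<le> 0" by (simp add: F_def)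
  ultimately show ?case unfolding FI_def by auto
next
  case (Suc j)
  thus ?case using FI_step[OF k] C by (auto simp: Cond_def)
qed

lemma Cond_realizable: "k \<ge> 1 \<Longrightarrow> Cond k H \<Longrightarrow> realizable k H"
proof -
  assume k: "k \<ge> 1" and C: "Cond k H"
  obtain F where F: "FI k H (size H) F" using FI_all[OF k C] by blast
  have "filter_mset (\<lambda>x. x \<le> size H) H = filter_mset (\<lambda>x. True) H" using C
    by (intro filter_mset_cong0) (auto simp: Cond_def)
  hence all: "filter_mset (\<lambda>x. x \<le> size H) H = H" by simp
  have ab: "above H (size H) = 0" using C by (auto simp: Cond_def above_def)
  have "length F \<le> 1" using F ab by (simp add: FI_def)
  moreover have "F \<noteq> []" using F all C by (auto simp: FI_def Cond_def)
  ultimately obtain t where "F = [t]" by (cases F) auto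
  thus ?thesis using F all by (auto simp: FI_def realizable_def)
qed

theorem realizable_iff: "k \<ge> 1 \<Longrightarrow> realizable k H \<longleftrightarrow> Cond k H"
  using realizable_Cond Cond_realizable by blast




definition Prog :: "instr list" where
  "Prog = [Jz 1 136,
  Add 1 1 0,
  Add 1 1 0,
  Add 1 1 0,
  Add 1 1 0,
  Add 1 1 0,
  Add 1 1 0,
  Add 1 1 0,
  Add 1 1 0,
  Add 1 1 0,
  Add 1 1 0,
  Add 1 1 0,
  Add 1 1 0,
  Add 1 1 0,
  Add 1 1 0,
  Add 1 1 0,
  Add 1 1 0,
  Store 1 0,
  LoadC 0 2,
  Add 0 0 1,
  Store 0 2,
  LoadC 0 3,
  Add 0 0 1,
  Store 0 3,
  LoadC 0 4,
  Add 0 0 1,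
  Store 0 4,
  LoadC 0 5,
  Add 0 0 1,
  Store 0 5,
  LoadC 0 6,
  Add 0 0 1,
  Store 0 6,
  LoadC 0 7,
  Add 0 0 1,
  Store 0 7,
  LoadC 0 8,
  Add 0 0 1,
  Store 0 8,
  LoadC 0 9,
  Add 0 0 1,
  Store 0 9,
  LoadC 0 10,
  Add 0 0 1,
  Store 0 10,
  LoadC 0 11,
  Add 0 0 1,
  Store 0 11,
  LoadC 0 12,
  Add 0 0 1,
  Store 0 12,
  LoadC 0 13,
  Add 0 0 1,
  Store 0 13,
  LoadC 0 14,
  Add 0 0 1,
  Store 0 14,
  LoadC 0 15,
  Add 0 0 1,
  Store 0 15,
  Load 3 1,
  LoadC 2 1,
  Sub 4 1 3,
  Sub 4 4 3,
  Sub 4 4 3,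
  Sub 4 4 3,
  Sub 4 4 3,
  Sub 4 4 3,
  Sub 4 4 3,
  Sub 4 4 3,
  Sub 4 4 3,
  Sub 4 4 3,
  Sub 4 4 3,
  Sub 4 4 3,
  Sub 4 4 3,
  Sub 4 4 3,
  Sub 4 4 3,
  Sub 4 4 3,
  Sub 3 3 2,
  LoadC 5 16,
  Add 5 5 1,
  Add 5 5 4,
  Add 6 5 4,
  LoadC 12 0,
  LoadC 7 16,
  LoadC 8 2,
  Add 8 8 4,
  Sub 11 7 8,
  Jneg 11 90,
  Jz 12 95,
  Load 10 7,
  Add 9 7 1,
  Store 9 10,
  Add 7 7 2,
  Jz 12 87,
  LoadC 7 2,
  Add 7 7 1,
  Add 8 7 4,
  Sub 11 7 8,
  Jneg 11 101,
  Jz 12 115,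
  Load 9 7,
  Sub 11 9 4,
  Jneg 11 105,
  Jz 12 136,
  Add 10 5 9,
  Load 11 10,
  Add 11 11 2,
  Store 10 11,
  Add 10 6 9,
  Load 11 10,
  Add 11 11 3,
  Store 10 11,
  Add 7 7 2,
  Jz 12 98,
  Sub 7 4 2,
  LoadC 13 0,
  LoadC 14 0,
  Jneg 7 134,
  Add 10 5 7,
  Load 15 10,
  Sub 11 15 14,
  Jneg 11 136,
  Sub 11 15 2,
  Sub 11 11 13,
  Jneg 11 128,
  Jz 11 128,
  Jz 12 136,
  Add 10 6 7,
  Load 11 10,
  Add 13 13 11,
  Add 14 15 12,
  Sub 7 7 2,
  Jz 12 118,
  LoadC 0 1,
  Jz 12 137,
  LoadC 0 0]"

lemma len_Prog[simp]: "length Prog = 137" by (simp add: Prog_def)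

lemma Prog_nth[simp]:
  "Prog ! 0 = Jz 1 136"
  "Prog ! 1 = Add 1 1 0"
  "Prog ! 2 = Add 1 1 0"
  "Prog ! 3 = Add 1 1 0"
  "Prog ! 4 = Add 1 1 0"
  "Prog ! 5 = Add 1 1 0"
  "Prog ! 6 = Add 1 1 0"
  "Prog ! 7 = Add 1 1 0"
  "Prog ! 8 = Add 1 1 0"
  "Prog ! 9 = Add 1 1 0"
  "Prog ! 10 = Add 1 1 0"
  "Prog ! 11 = Add 1 1 0"
  "Prog ! 12 = Add 1 1 0"
  "Prog ! 13 = Add 1 1 0"
  "Prog ! 14 = Add 1 1 0"
  "Prog ! 15 = Add 1 1 0"
  "Prog ! 16 = Add 1 1 0"
  "Prog ! 17 = Store 1 0"
  "Prog ! 18 = LoadC 0 2"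
  "Prog ! 19 = Add 0 0 1"
  "Prog ! 20 = Store 0 2"
  "Prog ! 21 = LoadC 0 3"
  "Prog ! 22 = Add 0 0 1"
  "Prog ! 23 = Store 0 3"
  "Prog ! 24 = LoadC 0 4"
  "Prog ! 25 = Add 0 0 1"
  "Prog ! 26 = Store 0 4"
  "Prog ! 27 = LoadC 0 5"
  "Prog ! 28 = Add 0 0 1"
  "Prog ! 29 = Store 0 5"
  "Prog ! 30 = LoadC 0 6"
  "Prog ! 31 = Add 0 0 1"
  "Prog ! 32 = Store 0 6"
  "Prog ! 33 = LoadC 0 7"
  "Prog ! 34 = Add 0 0 1"
  "Prog ! 35 = Store 0 7"
  "Prog ! 36 = LoadC 0 8"
  "Prog ! 37 = Add 0 0 1"
  "Prog ! 38 = Store 0 8"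
  "Prog ! 39 = LoadC 0 9"
  "Prog ! 40 = Add 0 0 1"
  "Prog ! 41 = Store 0 9"
  "Prog ! 42 = LoadC 0 10"
  "Prog ! 43 = Add 0 0 1"
  "Prog ! 44 = Store 0 10"
  "Prog ! 45 = LoadC 0 11"
  "Prog ! 46 = Add 0 0 1"
  "Prog ! 47 = Store 0 11"
  "Prog ! 48 = LoadC 0 12"
  "Prog ! 49 = Add 0 0 1"
  "Prog ! 50 = Store 0 12"
  "Prog ! 51 = LoadC 0 13"
  "Prog ! 52 = Add 0 0 1"
  "Prog ! 53 = Store 0 13"
  "Prog ! 54 = LoadC 0 14"
  "Prog ! 55 = Add 0 0 1"
  "Prog ! 56 = Store 0 14"
  "Prog ! 57 = LoadC 0 15"
  "Prog ! 58 = Add 0 0 1"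
  "Prog ! 59 = Store 0 15"
  "Prog ! 60 = Load 3 1"
  "Prog ! 61 = LoadC 2 1"
  "Prog ! 62 = Sub 4 1 3"
  "Prog ! 63 = Sub 4 4 3"
  "Prog ! 64 = Sub 4 4 3"
  "Prog ! 65 = Sub 4 4 3"
  "Prog ! 66 = Sub 4 4 3"
  "Prog ! 67 = Sub 4 4 3"
  "Prog ! 68 = Sub 4 4 3"
  "Prog ! 69 = Sub 4 4 3"
  "Prog ! 70 = Sub 4 4 3"
  "Prog ! 71 = Sub 4 4 3"
  "Prog ! 72 = Sub 4 4 3"
  "Prog ! 73 = Sub 4 4 3"
  "Prog ! 74 = Sub 4 4 3"
  "Prog ! 75 = Sub 4 4 3"
  "Prog ! 76 = Sub 4 4 3"
  "Prog ! 77 = Sub 4 4 3"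
  "Prog ! 78 = Sub 3 3 2"
  "Prog ! 79 = LoadC 5 16"
  "Prog ! 80 = Add 5 5 1"
  "Prog ! 81 = Add 5 5 4"
  "Prog ! 82 = Add 6 5 4"
  "Prog ! 83 = LoadC 12 0"
  "Prog ! 84 = LoadC 7 16"
  "Prog ! 85 = LoadC 8 2"
  "Prog ! 86 = Add 8 8 4"
  "Prog ! 87 = Sub 11 7 8"
  "Prog ! 88 = Jneg 11 90"
  "Prog ! 89 = Jz 12 95"
  "Prog ! 90 = Load 10 7"
  "Prog ! 91 = Add 9 7 1"
  "Prog ! 92 = Store 9 10"
  "Prog ! 93 = Add 7 7 2"
  "Prog ! 94 = Jz 12 87"
  "Prog ! 95 = LoadC 7 2"
  "Prog ! 96 = Add 7 7 1"
  "Prog ! 97 = Add 8 7 4"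
  "Prog ! 98 = Sub 11 7 8"
  "Prog ! 99 = Jneg 11 101"
  "Prog ! 100 = Jz 12 115"
  "Prog ! 101 = Load 9 7"
  "Prog ! 102 = Sub 11 9 4"
  "Prog ! 103 = Jneg 11 105"
  "Prog ! 104 = Jz 12 136"
  "Prog ! 105 = Add 10 5 9"
  "Prog ! 106 = Load 11 10"
  "Prog ! 107 = Add 11 11 2"
  "Prog ! 108 = Store 10 11"
  "Prog ! 109 = Add 10 6 9"
  "Prog ! 110 = Load 11 10"
  "Prog ! 111 = Add 11 11 3"
  "Prog ! 112 = Store 10 11"
  "Prog ! 113 = Add 7 7 2"
  "Prog ! 114 = Jz 12 98"
  "Prog ! 115 = Sub 7 4 2"
  "Prog ! 116 = LoadC 13 0"
  "Prog ! 117 = LoadC 14 0"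
  "Prog ! 118 = Jneg 7 134"
  "Prog ! 119 = Add 10 5 7"
  "Prog ! 120 = Load 15 10"
  "Prog ! 121 = Sub 11 15 14"
  "Prog ! 122 = Jneg 11 136"
  "Prog ! 123 = Sub 11 15 2"
  "Prog ! 124 = Sub 11 11 13"
  "Prog ! 125 = Jneg 11 128"
  "Prog ! 126 = Jz 11 128"
  "Prog ! 127 = Jz 12 136"
  "Prog ! 128 = Add 10 6 7"
  "Prog ! 129 = Load 11 10"
  "Prog ! 130 = Add 13 13 11"
  "Prog ! 131 = Add 14 15 12"
  "Prog ! 132 = Sub 7 7 2"
  "Prog ! 133 = Jz 12 118"
  "Prog ! 134 = LoadC 0 1"
  "Prog ! 135 = Jz 12 137"
  "Prog ! 136 = LoadC 0 0"
  by (simp_all add: Prog_def)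

declare step.simps[simp]

lemma run_halted: "length P \<le> fst s \<Longrightarrow> run P b s = s"
  by (induction b) auto

lemma run_add: "run P (a + b) s = run P b (run P a s)"
proof (induction a arbitrary: s)
  case (Suc a)
  show ?case
  proof (cases "length P \<le> fst s")
    case True thus ?thesis by (simp add: run_halted)
  next
    case False thus ?thesis using Suc by simp
  qed
qed simp

lemma run_num: "run P (numeral w) s = (if length P \<le> fst s then s else run P (pred_numeral w) (step P s))"
  by (simp add: numeral_eq_Suc)

definition good :: "config \<Rightarrow> nat \<Rightarrow> bool \<Rightarrow> bool" where
  "good s b Q \<longleftrightarrow> (\<exists>t\<le>b. halted Prog (run Prog t s) \<and> (snd (run Prog t s) 0 = 1 \<longleftrightarrow> Q))"

lemma good_run: "run Prog a s = s' \<Longrightarrow> good s' b Q \<Longrightarrow> good s (a + b) Q"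
  unfolding good_def
proof (elim exE conjE)
  fix t assume r: "run Prog a s = s'" and t: "t \<le> b" "halted Prog (run Prog t s')"
    "(snd (run Prog t s') 0 = 1) = Q"
  show "\<exists>t\<le>a + b. halted Prog (run Prog t s) \<and> (snd (run Prog t s) 0 = 1) = Q"
    by (rule exI[of _ "a + t"]) (use r t in \<open>simp add: run_add\<close>)
qed

lemma good_mono: "good s b Q \<Longrightarrow> b \<le> b' \<Longrightarrow> good s b' Q"
  unfolding good_def by (meson order_trans)

lemma good_fin: "length Prog \<le> fst s \<Longrightarrow> good s 0 (snd s 0 = 1)"
  unfolding good_def halted_def by (rule exI[of _ 0]) simp

lemma good_rej: "good (136, m) 1 False"
proof -
  have "run Prog 1 (136, m) = (137, m(0 := 0))" by (simp add: run_num)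
  moreover have "good (137, m(0 := 0)) 0 False" using good_fin[of "(137, m(0:=0))"] by simp
  ultimately show ?thesis using good_run by fastforce
qed

lemma good_acc: "m 12 = 0 \<Longrightarrow> good (134, m) 2 True"
proof -
  assume "m 12 = 0"
  hence "run Prog 2 (134, m) = (137, m(0 := 1))" by (simp add: run_num)
  moreover have "good (137, m(0 := 1)) 0 True" using good_fin[of "(137, m(0:=1))"] by simp
  ultimately show ?thesis using good_run by fastforce
qed

lemma nat_int_add[simp]: "nat (int a + int b) = a + b"
  by (simp add: nat_add_distrib)

lemma nat_int_add3[simp]: "nat (int a + int b + int c) = a + b + c"
  by (simp add: nat_add_distrib)

lemma nat_num_add[simp]: "nat (numeral w + int a) = numeral w + a"
  by (simp add: nat_add_distrib)

lemma nat_add_num[simp]: "nat (int a + numeral w) = a + numeral w"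
  by (simp add: nat_add_distrib)

lemma Prog_Suc0: "Prog ! Suc 0 = Add 1 1 0" by (simp add: Prog_def)
lemma Suc_Suc_0: "Suc (Suc 0) = 2" by simp

lemma nat_int_add_mult[simp]: "nat (int a + numeral w * int b) = a + numeral w * b"
  by (simp add: nat_add_distrib nat_mult_distrib)

definition Aof :: "nat \<Rightarrow> nat list \<Rightarrow> nat" where "Aof k hs = length hs + 16 * k"
definition Bof :: "nat \<Rightarrow> nat list \<Rightarrow> nat" where "Bof k hs = Aof k hs + length hs + 16"

definition regs :: "nat \<Rightarrow> nat list \<Rightarrow> (nat \<Rightarrow> int) \<Rightarrow> bool" where
  "regs k hs m \<longleftrightarrow> k \<ge> 1 \<and> m 1 = int (Aof k hs) \<and> m 2 = 1 \<and> m 3 = int k - 1 \<and> m 4 = int (length hs)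
     \<and> m 5 = int (Bof k hs) \<and> m 6 = int (Bof k hs + length hs) \<and> m 12 = 0"

lemma Aof_ge: "k \<ge> 1 \<Longrightarrow> length hs + 16 \<le> Aof k hs"
  by (simp add: Aof_def)

definition CI :: "nat \<Rightarrow> nat list \<Rightarrow> nat \<Rightarrow> (nat \<Rightarrow> int) \<Rightarrow> bool" where
  "CI k hs p m \<longleftrightarrow> regs k hs m \<and> m 7 = int p \<and> m 8 = int (length hs + 2) \<and> 16 \<le> p \<and> p \<le> length hs + 16
     \<and> (\<forall>j. 2 \<le> j \<longrightarrow> j < p \<longrightarrow> j < length hs + 2 \<longrightarrow> m (Aof k hs + j) = int (hs ! (j - 2)))
     \<and> (\<forall>j. p \<le> j \<longrightarrow> j < length hs + 2 \<longrightarrow> m j = int (hs ! (j - 2)))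
     \<and> (\<forall>x. Aof k hs + p \<le> x \<longrightarrow> m x = 0)"

definition copyM :: "nat \<Rightarrow> nat list \<Rightarrow> nat \<Rightarrow> (nat \<Rightarrow> int) \<Rightarrow> (nat \<Rightarrow> int)" where
  "copyM k hs p m = m(11 := int p - int (length hs + 2), 10 := m p,
     9 := int p + int (Aof k hs), p + Aof k hs := m p, 7 := int p + 1)"

lemma copy_body:
  assumes CI: "CI k hs p m" and lt: "p < length hs + 2"
  shows "run Prog 7 (87, m) = (87, copyM k hs p m)"
    and "CI k hs (Suc p) (copyM k hs p m)"
proof -
  have k: "k \<ge> 1" and r: "m 7 = int p" "m 8 = int (length hs + 2)" "m 1 = int (Aof k hs)" "m 2 = 1" "m 12 = 0" "16 \<le> p"
    using CI by (auto simp: CI_def regs_def)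
  have A: "length hs + 16 \<le> Aof k hs" using Aof_ge[OF k] .
  show "run Prog 7 (87, m) = (87, copyM k hs p m)" using r lt A by (simp add: run_num add.commute copyM_def)
  show "CI k hs (Suc p) (copyM k hs p m)"
    using CI lt A unfolding CI_def regs_def copyM_def
    apply (intro conjI allI impI)
    apply (simp_all add: Bof_def)
    done
qed

definition KI :: "nat \<Rightarrow> nat list \<Rightarrow> nat \<Rightarrow> (nat \<Rightarrow> int) \<Rightarrow> bool" where
  "KI k hs i m \<longleftrightarrow> regs k hs m \<and> m 7 = int (Aof k hs + 2 + i) \<and> m 8 = int (Aof k hs + 2 + length hs)
     \<and> i \<le> length hs
     \<and> (\<forall>j<length hs. m (Aof k hs + 2 + j) = int (hs ! j))
     \<and> (\<forall>v<length hs. m (Bof k hs + v) = int (count (mset (take i hs)) v))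
     \<and> (\<forall>v<length hs. m (Bof k hs + length hs + v) = (int k - 1) * int (count (mset (take i hs)) v))
     \<and> (\<forall>j<i. hs ! j < length hs)"

lemma copy_exit:
  assumes CI: "CI k hs p m" and ge: "length hs + 2 \<le> p"
  shows "fst (run Prog 6 (87, m)) = 98 \<and> KI k hs 0 (snd (run Prog 6 (87, m)))"
proof -
  have k: "k \<ge> 1" and r: "m 7 = int p" "m 8 = int (length hs + 2)" "m 1 = int (Aof k hs)" "m 2 = 1" "m 12 = 0" "16 \<le> p"
    "m 4 = int (length hs)"
    using CI by (auto simp: CI_def regs_def)
  have A: "length hs + 16 \<le> Aof k hs" using Aof_ge[OF k] .
  have H: "\<forall>j. 2 \<le> j \<longrightarrow> j < p \<longrightarrow> j < length hs + 2 \<longrightarrow> m (Aof k hs + j) = int (hs ! (j - 2))"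
    using CI unfolding CI_def by blast
  have cp: "\<And>j. j < length hs \<Longrightarrow> m (Aof k hs + 2 + j) = int (hs ! j)"
  proof -
    fix j assume j: "j < length hs"
    have "m (Aof k hs + (j + 2)) = int (hs ! (j + 2 - 2))"
      using H[rule_format, of "j+2"] ge j by simp
    thus "m (Aof k hs + 2 + j) = int (hs ! j)" by (simp add: add.commute add.left_commute)
  qed
  have "run Prog 6 (87, m) = (98, m(11 := int p - int (length hs + 2), 7 := int (Aof k hs + 2),
     8 := int (Aof k hs + 2 + length hs)))"
    using r ge A by (simp add: run_num add.assoc)
  moreover have "KI k hs 0 (m(11 := int p - int (length hs + 2), 7 := int (Aof k hs + 2),
     8 := int (Aof k hs + 2 + length hs)))"
    using CI ge A cp unfolding CI_def regs_def KI_def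
    apply (intro conjI allI impI)
    apply (simp_all add: Bof_def)
    done
  ultimately show ?thesis by simp
qed

lemma copy_loop:
  assumes "CI k hs p m" and ex: "\<And>m'. KI k hs 0 m' \<Longrightarrow> good (98, m') b Q"
  shows "good (87, m) (7 * (length hs + 2 - p) + 6 + b) Q"
  using assms(1)
proof (induction "length hs + 2 - p" arbitrary: p m)
  case 0
  hence ge: "length hs + 2 \<le> p" by simp
  have "good (87, m) (6 + b) Q"
    using copy_exit[OF "0.prems" ge] ex by (intro good_run[of 6 _ "(98, snd (run Prog 6 (87, m)))"]) (auto simp: prod_eq_iff)
  thus ?case using ge by simp
next
  case (Suc d)
  hence lt: "p < length hs + 2" by simp
  have "good (87, copyM k hs p m) (7 * (length hs + 2 - Suc p) + 6 + b) Q"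
    using Suc.hyps(1)[of "Suc p"] Suc.hyps(2) copy_body(2)[OF Suc.prems lt] by simp
  hence "good (87, m) (7 + (7 * (length hs + 2 - Suc p) + 6 + b)) Q"
    by (rule good_run[OF copy_body(1)[OF Suc.prems lt]])
  moreover have "7 + (7 * (length hs + 2 - Suc p) + 6 + b) = 7 * (length hs + 2 - p) + 6 + b"
    using lt by simp
  ultimately show ?case by metis
qed

definition countM :: "(nat \<Rightarrow> int) \<Rightarrow> nat \<Rightarrow> nat \<Rightarrow> nat \<Rightarrow> nat \<Rightarrow> int \<Rightarrow> (nat \<Rightarrow> int)" where
  "countM m a b n h kk = m(9 := int h, b + h := m (b + h) + 1, 10 := int b + int n + int h,
     11 := m (b + n + h) + kk, b + n + h := m (b + n + h) + kk, 7 := int a + 1)"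

lemma count_run:
  assumes "m 7 = int a" "m 8 = int e" "a < e" "m 4 = int n" "m a = int h" "h < n" "m 5 = int b"
    "m 6 = int (b + n)" "m 2 = 1" "m 3 = kk" "m 12 = 0" "16 \<le> b" "16 \<le> a"
  shows "run Prog 15 (98, m) = (98, countM m a b n h kk)"
  using assms by (simp add: run_num countM_def)

lemma count_rej_run:
  assumes "m 7 = int a" "m 8 = int e" "a < e" "m 4 = int n" "m a = int h" "n \<le> h"
    "m 12 = 0" "16 \<le> a"
  shows "fst (run Prog 6 (98, m)) = 136"
  using assms by (simp add: run_num)

lemma good_cong: "good s b Q \<Longrightarrow> Q = Q' \<Longrightarrow> good s b Q'"
  by simp

lemma count_body:
  assumes KI: "KI k hs i m" and lt: "i < length hs" and hlt: "hs ! i < length hs"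
  shows "run Prog 15 (98, m) = (98, countM m (Aof k hs + 2 + i) (Bof k hs) (length hs) (hs ! i) (int k - 1))"
    and "KI k hs (Suc i) (countM m (Aof k hs + 2 + i) (Bof k hs) (length hs) (hs ! i) (int k - 1))"
proof -
  have k: "k \<ge> 1" and r: "m 1 = int (Aof k hs)" "m 2 = 1" "m 3 = int k - 1" "m 4 = int (length hs)"
     "m 5 = int (Bof k hs)" "m 6 = int (Bof k hs + length hs)" "m 12 = 0"
     "m 7 = int (Aof k hs + 2 + i)" "m 8 = int (Aof k hs + 2 + length hs)"
    using KI by (auto simp: KI_def regs_def)
  have A: "length hs + 16 \<le> Aof k hs" using Aof_ge[OF k] .
  have B: "Bof k hs = Aof k hs + length hs + 16" by (simp add: Bof_def)
  have mi: "m (Aof k hs + 2 + i) = int (hs ! i)" using KI lt by (simp add: KI_def)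
  show "run Prog 15 (98, m) = (98, countM m (Aof k hs + 2 + i) (Bof k hs) (length hs) (hs ! i) (int k - 1))"
    by (rule count_run[where e = "Aof k hs + 2 + length hs"]) (use r mi hlt lt A B in auto)
  show "KI k hs (Suc i) (countM m (Aof k hs + 2 + i) (Bof k hs) (length hs) (hs ! i) (int k - 1))"
    using KI lt hlt A B unfolding KI_def regs_def countM_def
    apply (intro conjI allI impI)
    apply (simp_all add: take_Suc_conv_app_nth less_Suc_eq)
    apply (auto simp: algebra_simps)
    done
qed

lemma count_rej:
  assumes KI: "KI k hs i m" and lt: "i < length hs" and hge: "length hs \<le> hs ! i"
  shows "good (98, m) 7 False"
proof -
  have k: "k \<ge> 1" and r: "m 4 = int (length hs)" "m 12 = 0"
     "m 7 = int (Aof k hs + 2 + i)" "m 8 = int (Aof k hs + 2 + length hs)"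
    using KI by (auto simp: KI_def regs_def)
  have A: "length hs + 16 \<le> Aof k hs" using Aof_ge[OF k] .
  have mi: "m (Aof k hs + 2 + i) = int (hs ! i)" using KI lt by (simp add: KI_def)
  have f: "fst (run Prog 6 (98, m)) = 136"
    by (rule count_rej_run[where e = "Aof k hs + 2 + length hs"]) (use r mi hge lt A in auto)
  have "run Prog 6 (98, m) = (136, snd (run Prog 6 (98, m)))" using f by (simp add: prod_eq_iff)
  from good_run[OF this good_rej] show ?thesis by simp
qed

lemma count_loop:
  assumes "KI k hs i m" and ex: "\<And>m'. KI k hs (length hs) m' \<Longrightarrow> good (98, m') b Q"
  shows "good (98, m) (15 * (length hs - i) + 7 + b) ((\<forall>j. i \<le> j \<and> j < length hs \<longrightarrow> hs ! j < length hs) \<and> Q)"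
  using assms(1)
proof (induction "length hs - i" arbitrary: i m)
  case 0
  hence i: "i = length hs" by (simp add: KI_def)
  have "good (98, m) b Q" using ex "0.prems" i by simp
  thus ?case using i by (auto elim: good_mono good_cong)
next
  case (Suc d)
  hence lt: "i < length hs" by simp
  show ?case
  proof (cases "hs ! i < length hs")
    case True
    have "good (98, countM m (Aof k hs + 2 + i) (Bof k hs) (length hs) (hs ! i) (int k - 1))
        (15 * (length hs - Suc i) + 7 + b) ((\<forall>j. Suc i \<le> j \<and> j < length hs \<longrightarrow> hs ! j < length hs) \<and> Q)"
      using Suc.hyps(1)[of "Suc i"] Suc.hyps(2) count_body(2)[OF Suc.prems lt True] by simp
    hence g: "good (98, m) (15 + (15 * (length hs - Suc i) + 7 + b)) ((\<forall>j. Suc i \<le> j \<and> j < length hs \<longrightarrow> hs ! j < length hs) \<and> Q)"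
      by (rule good_run[OF count_body(1)[OF Suc.prems lt True]])
    have e1: "15 + (15 * (length hs - Suc i) + 7 + b) = 15 * (length hs - i) + 7 + b" using lt by simp
    have e2: "(\<forall>j. Suc i \<le> j \<and> j < length hs \<longrightarrow> hs ! j < length hs) =
              (\<forall>j. i \<le> j \<and> j < length hs \<longrightarrow> hs ! j < length hs)"
    proof
      assume a: "\<forall>j. Suc i \<le> j \<and> j < length hs \<longrightarrow> hs ! j < length hs"
      show "\<forall>j. i \<le> j \<and> j < length hs \<longrightarrow> hs ! j < length hs"
      proof (intro allI impI)
        fix j assume "i \<le> j \<and> j < length hs"
        thus "hs ! j < length hs" using a True by (cases "j = i") auto
      qed
    qed auto
    show ?thesis using g e1 e2 by simp
  next
    case False
    have "good (98, m) 7 False" using count_rej[OF Suc.prems lt] False by simp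
    hence "good (98, m) (15 * (length hs - i) + 7 + b) False" by (rule good_mono) simp
    moreover have "False = ((\<forall>j. i \<le> j \<and> j < length hs \<longrightarrow> hs ! j < length hs) \<and> Q)"
      using False lt by auto
    ultimately show ?thesis by (rule good_cong)
  qed
qed

definition CK :: "nat \<Rightarrow> nat list \<Rightarrow> nat \<Rightarrow> (nat \<Rightarrow> int) \<Rightarrow> bool" where
  "CK k hs i m \<longleftrightarrow> regs k hs m \<and> m 7 = int i - 1 \<and> i \<le> length hs
     \<and> (\<forall>v<length hs. m (Bof k hs + v) = int (count (mset hs) v))
     \<and> (\<forall>v<length hs. m (Bof k hs + length hs + v) = (int k - 1) * int (count (mset hs) v))
     \<and> m 13 = (int k - 1) * int (size (filter_mset (\<lambda>x. i \<le> x) (mset hs)))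
     \<and> m 14 = int (count (mset hs) i)
     \<and> (\<forall>x\<in>#mset hs. x < length hs)"

lemma count_exit:
  assumes KI: "KI k hs (length hs) m"
  shows "fst (run Prog 6 (98, m)) = 118 \<and> CK k hs (length hs) (snd (run Prog 6 (98, m)))"
proof -
  have k: "k \<ge> 1" and r: "m 2 = 1" "m 4 = int (length hs)" "m 12 = 0"
     "m 7 = int (Aof k hs + 2 + length hs)" "m 8 = int (Aof k hs + 2 + length hs)"
    using KI by (auto simp: KI_def regs_def)
  have "run Prog 6 (98, m) = (118, m(11 := 0, 7 := int (length hs) - 1, 13 := 0, 14 := 0))"
    using r by (simp add: run_num)
  moreover have all: "\<forall>x\<in>#mset hs. x < length hs" using KI by (auto simp: KI_def in_set_conv_nth)
  moreover have "CK k hs (length hs) (m(11 := 0, 7 := int (length hs) - 1, 13 := 0, 14 := 0))"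
    using KI all Aof_ge[OF k] unfolding Bof_def CK_def KI_def regs_def
    by (auto simp: count_eq_zero_iff Bof_def)
  ultimately show ?thesis by simp
qed

lemma check_run_A:
  assumes "m 7 = int j" "m 5 = int b" "m 14 = int pv" "m (b + j) = int c" "c < pv" "16 \<le> b"
  shows "fst (run Prog 5 (118, m)) = 136"
  using assms by (simp add: run_num)

lemma check_run_B:
  assumes "m 7 = int j" "m 5 = int b" "m 2 = 1" "m 12 = 0" "m 14 = int pv" "m 13 = T" "m (b + j) = int c"
    "pv \<le> c" "int c - 1 - T > 0" "16 \<le> b"
  shows "fst (run Prog 10 (118, m)) = 136"
  using assms by (simp add: run_num)

definition ckP :: "(nat \<Rightarrow> int) \<Rightarrow> (nat \<Rightarrow> int) \<Rightarrow> nat \<Rightarrow> int \<Rightarrow> int \<Rightarrow> nat \<Rightarrow> bool" where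
  "ckP m m' j T d c \<longleftrightarrow> m' 7 = int j - 1 \<and> m' 13 = T + d \<and> m' 14 = int c
     \<and> (\<forall>x. x \<notin> {7, 10, 11, 13, 14, 15} \<longrightarrow> m' x = m x)"

lemma check_run_C:
  assumes "m 7 = int j" "m 5 = int b" "m 6 = int (b + n)" "m 2 = 1" "m 12 = 0" "m 14 = int pv" "m 13 = T"
    "m (b + j) = int c" "m (b + n + j) = d" "pv \<le> c" "int c - 1 - T \<le> 0" "16 \<le> b"
  shows "\<exists>t\<le>15. fst (run Prog t (118, m)) = 118 \<and> ckP m (snd (run Prog t (118, m))) j T d c"
proof (cases "int c - 1 - T = 0")
  case True
  have "fst (run Prog 15 (118, m)) = 118 \<and> ckP m (snd (run Prog 15 (118, m))) j T d c"
    using assms True by (simp add: run_num ckP_def)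
  thus ?thesis by blast
next
  case False
  have "fst (run Prog 14 (118, m)) = 118 \<and> ckP m (snd (run Prog 14 (118, m))) j T d c"
    using assms False by (simp add: run_num ckP_def)
  thus ?thesis by (intro exI[of _ 14]) simp
qed

lemma size_ge_Suc: "size (filter_mset (\<lambda>x. Suc j \<le> x) H) = above H j"
  unfolding above_def by (simp add: Suc_le_eq)

lemma size_ge_split: "size (filter_mset (\<lambda>x. j \<le> x) H) = count H j + size (filter_mset (\<lambda>x. Suc j \<le> x) H)"
proof -
  have "filter_mset (\<lambda>x. j \<le> x) H = filter_mset (\<lambda>x. x = j) H + filter_mset (\<lambda>x. Suc j \<le> x) H"
    by (rule multiset_eqI) auto
  thus ?thesis by (simp add: filter_eq_replicate_mset)
qed

definition QC :: "nat \<Rightarrow> nat multiset \<Rightarrow> nat \<Rightarrow> bool" where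
  "QC k H i \<longleftrightarrow> (\<forall>j<i. count H (Suc j) \<le> count H j \<and> int (count H j) \<le> 1 + (int k - 1) * int (above H j))"

lemma good_from_fst:
  assumes a: "fst (run Prog t s) = pc" and g: "good (pc, snd (run Prog t s)) b Q"
  shows "good s (t + b) Q"
proof -
  have "run Prog t s = (pc, snd (run Prog t s))" using a by (metis prod.collapse)
  from good_run[OF this g] show ?thesis .
qed

lemma check_loop:
  assumes "CK k hs i m"
  shows "good (118, m) (15 * i + 3) (QC k (mset hs) i)"
  using assms
proof (induction i arbitrary: m)
  case 0
  have r: "m 7 = -1" "m 12 = 0" using "0.prems" by (auto simp: CK_def regs_def)
  have "run Prog 1 (118, m) = (134, m)" using r by (simp add: run_num)
  from good_run[OF this good_acc[of m, OF r(2)]] show ?case by (simp add: QC_def numeral_eq_Suc)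
next
  case (Suc j)
  define H where "H = mset hs"
  define c where "c = count H j"
  define pv where "pv = count H (Suc j)"
  define T where "T = (int k - 1) * int (size (filter_mset (\<lambda>x. Suc j \<le> x) H))"
  have CK: "CK k hs (Suc j) m" by fact
  have k: "k \<ge> 1" and r: "m 7 = int j" "m 5 = int (Bof k hs)" "m 6 = int (Bof k hs + length hs)" "m 2 = 1"
    "m 12 = 0" "m 14 = int pv" "m 13 = T" and jl: "j < length hs"
    using CK by (auto simp: CK_def regs_def pv_def T_def H_def)
  have B: "16 \<le> Bof k hs" by (simp add: Bof_def)
  have mc: "m (Bof k hs + j) = int c" using CK jl by (simp add: CK_def c_def H_def)
  have md: "m (Bof k hs + length hs + j) = (int k - 1) * int c" using CK jl by (simp add: CK_def c_def H_def)
  have Teq: "T = (int k - 1) * int (above H j)" by (simp add: T_def size_ge_Suc)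
  show ?case
  proof (cases "c < pv")
    case True
    have "good (118, m) (5 + 1) False"
      by (rule good_from_fst[OF check_run_A[OF r(1,2) r(6) mc True B]]) (rule good_rej)
    moreover have "\<not> QC k (mset hs) (Suc j)" using True by (auto simp: QC_def c_def pv_def H_def)
    ultimately show ?thesis by (auto elim: good_mono good_cong)
  next
    case ge: False
    show ?thesis
    proof (cases "int c - 1 - T > 0")
      case True
      have "good (118, m) (10 + 1) False"
        by (rule good_from_fst[OF check_run_B[OF r(1,2,4,5,6,7) mc _ True B]]) (use ge in simp, rule good_rej)
      moreover have "\<not> QC k (mset hs) (Suc j)" using True Teq by (auto simp: QC_def c_def H_def)
      ultimately show ?thesis by (auto elim: good_mono good_cong)
    next
      case False
      obtain t where t: "t \<le> 15" "fst (run Prog t (118, m)) = 118"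
        and P: "ckP m (snd (run Prog t (118, m))) j T ((int k - 1) * int c) c"
        using check_run_C[OF r(1,2,3,4,5,6,7) mc md _ _ B] ge False by force
      define m' where "m' = snd (run Prog t (118, m))"
      have pres: "\<And>x. x \<notin> {7, 10, 11, 13, 14, 15} \<Longrightarrow> m' x = m x"
        and p7: "m' 7 = int j - 1" and p13: "m' 13 = T + (int k - 1) * int c" and p14: "m' 14 = int c"
        using P unfolding ckP_def m'_def by auto
      have a1: "\<And>v. m' (Bof k hs + v) = m (Bof k hs + v)" "\<And>v. m' (Bof k hs + length hs + v) = m (Bof k hs + length hs + v)"
        using B by (auto intro!: pres)
      have a2: "m' 1 = m 1" "m' 2 = m 2" "m' 3 = m 3" "m' 4 = m 4" "m' 5 = m 5" "m' 6 = m 6" "m' 12 = m 12"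
        by (auto intro!: pres)
      have t13: "T + (int k - 1) * int c = (int k - 1) * int (size (filter_mset (\<lambda>x. j \<le> x) (mset hs)))"
        by (simp add: T_def c_def H_def size_ge_split[of j] algebra_simps)
      have "CK k hs j m'"
        using CK jl unfolding CK_def regs_def
        by (simp only: a1 a2 p7 p13 p14 t13) (simp add: c_def H_def)
      hence "good (118, m') (15 * j + 3) (QC k (mset hs) j)" by (rule Suc.IH)
      hence "good (118, m) (t + (15 * j + 3)) (QC k (mset hs) j)"
        using good_from_fst[OF t(2)] m'_def by simp
      moreover have "QC k (mset hs) j = QC k (mset hs) (Suc j)"
        using ge False Teq by (auto simp: QC_def less_Suc_eq c_def pv_def H_def)
      ultimately show ?thesis using t(1) by (auto elim: good_mono good_cong)
    qed
  qed
qed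

lemma seg1:
  assumes "m 0 = int k" "m 1 = int n" "n \<ge> 1"
  shows "run Prog 17 (0, m) = (17, m(1 := 16 * int k + int n))"
  using assms by (simp add: run_num Prog_Suc0 Suc_Suc_0)

lemma seg2:
  assumes "m 0 = int k" "m 1 = int A" "16 \<le> A"
  shows "fst (run Prog 43 (17, m)) = 60 \<and> (let m' = snd (run Prog 43 (17, m)) in
     m' 1 = int A \<and> m' A = int k \<and> (\<forall>j. 2 \<le> j \<longrightarrow> j \<le> 15 \<longrightarrow> m' (A + j) = m j)
     \<and> (\<forall>x. 1 \<le> x \<longrightarrow> x \<noteq> A \<longrightarrow> (x < A + 2 \<or> A + 15 < x) \<longrightarrow> m' x = m x))"
  using assms apply (simp add: run_num Let_def)
  apply clarify
  apply (subgoal_tac False, simp)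
  apply arith
  done

lemma seg3:
  assumes "m 1 = int A" "m A = int k" "A = n + 16 * k" "16 \<le> A"
  shows "fst (run Prog 27 (60, m)) = 87 \<and> (let m' = snd (run Prog 27 (60, m)) in
     m' 1 = int A \<and> m' 2 = 1 \<and> m' 3 = int k - 1 \<and> m' 4 = int n \<and> m' 5 = int (A + n + 16)
     \<and> m' 6 = int (A + n + 16 + n) \<and> m' 12 = 0 \<and> m' 7 = 16 \<and> m' 8 = int (n + 2)
     \<and> (\<forall>x. 16 \<le> x \<longrightarrow> m' x = m x))"
  using assms by (simp add: run_num Let_def)

lemma input_simps:
  "input k hs 0 = int k" "input k hs (Suc 0) = int (length hs)"
  "2 \<le> j \<Longrightarrow> j < length hs + 2 \<Longrightarrow> input k hs j = int (hs ! (j - 2))"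
  "length hs + 2 \<le> j \<Longrightarrow> input k hs j = 0"
  by (auto simp: input_def)

lemma prefix:
  assumes n: "length hs \<ge> 1" and k: "k \<ge> 1"
  shows "fst (run Prog 87 (0, input k hs)) = 87 \<and> CI k hs 16 (snd (run Prog 87 (0, input k hs)))"
proof -
  define n where "n = length hs"
  define A where "A = n + 16 * k"
  define m0 where "m0 = input k hs"
  define m1 where "m1 = m0(1 := 16 * int k + int n)"
  have r1: "run Prog 17 (0, m0) = (17, m1)"
    unfolding m1_def by (rule seg1) (use n in \<open>auto simp: m0_def n_def input_simps\<close>)
  have A16: "16 \<le> A" using k by (simp add: A_def)
  have m1a: "m1 0 = int k" "m1 1 = int A" by (auto simp: m1_def m0_def input_simps A_def)
  define m2 where "m2 = snd (run Prog 43 (17, m1))"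
  have s2: "fst (run Prog 43 (17, m1)) = 60" and m2a: "m2 1 = int A" "m2 A = int k"
    and m2b: "\<And>j. 2 \<le> j \<Longrightarrow> j \<le> 15 \<Longrightarrow> m2 (A + j) = m1 j"
    and m2c: "\<And>x. 1 \<le> x \<Longrightarrow> x \<noteq> A \<Longrightarrow> (x < A + 2 \<or> A + 15 < x) \<Longrightarrow> m2 x = m1 x"
    using seg2[OF m1a A16] unfolding m2_def Let_def by auto
  have r2: "run Prog 43 (17, m1) = (60, m2)" using s2 unfolding m2_def by (metis prod.collapse)
  define m3 where "m3 = snd (run Prog 27 (60, m2))"
  have s3: "fst (run Prog 27 (60, m2)) = 87"
    and m3a: "m3 1 = int A" "m3 2 = 1" "m3 3 = int k - 1" "m3 4 = int n" "m3 5 = int (A + n + 16)"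
     "m3 6 = int (A + n + 16 + n)" "m3 12 = 0" "m3 7 = 16" "m3 8 = int (n + 2)"
    and m3b: "\<And>x. 16 \<le> x \<Longrightarrow> m3 x = m2 x"
    using seg3[OF m2a A_def A16] unfolding m3_def Let_def by auto
  have r3: "run Prog 27 (60, m2) = (87, m3)" using s3 unfolding m3_def by (metis prod.collapse)
  have run: "run Prog 87 (0, input k hs) = (87, m3)"
    using r1 r2 r3 run_add[of Prog 17 "43 + 27" "(0, m0)"] run_add[of Prog 43 27 "(17, m1)"]
    by (simp add: m0_def)
  have CI: "CI k hs 16 m3"
    unfolding CI_def regs_def
  proof (intro conjI allI impI)
    show "m3 1 = int (Aof k hs)" using m3a by (simp add: Aof_def A_def n_def)
    show "m3 4 = int (length hs)" using m3a by (simp add: n_def)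
    show "m3 5 = int (Bof k hs)" using m3a by (simp add: Bof_def Aof_def A_def n_def)
    show "m3 6 = int (Bof k hs + length hs)" using m3a by (simp add: Bof_def Aof_def A_def n_def)
    show "m3 8 = int (length hs + 2)" using m3a by (simp add: n_def)
    fix j assume j: "2 \<le> j" "j < 16" "j < length hs + 2"
    have "m3 (Aof k hs + j) = m2 (A + j)" using m3b[of "A + j"] A16 by (simp add: Aof_def A_def n_def)
    also have "\<dots> = m1 j" using m2b j by simp
    also have "\<dots> = int (hs ! (j - 2))" using j by (simp add: m1_def m0_def input_simps)
    finally show "m3 (Aof k hs + j) = int (hs ! (j - 2))" .
  next
    fix j assume j: "16 \<le> j" "j < length hs + 2"
    have "m3 j = m2 j" using m3b j by simp
    also have "\<dots> = m1 j" using m2c[of j] j k by (simp add: A_def n_def)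
    also have "\<dots> = int (hs ! (j - 2))" using j by (simp add: m1_def m0_def input_simps)
    finally show "m3 j = int (hs ! (j - 2))" .
  next
    fix x assume x: "Aof k hs + 16 \<le> x"
    have "m3 x = m2 x" using m3b x by (simp add: Aof_def)
    also have "\<dots> = m1 x" using m2c[of x] x by (simp add: A_def n_def Aof_def)
    also have "\<dots> = 0" using x by (simp add: m1_def m0_def input_simps Aof_def)
    finally show "m3 x = 0" .
  qed (use m3a k n in \<open>auto simp: n_def\<close>)
  show ?thesis using run CI by simp
qed

lemma Cond_iff:
  assumes k: "k \<ge> 1" and n: "length hs \<ge> 1"
  shows "Cond k (mset hs) \<longleftrightarrow> (\<forall>j. 0 \<le> j \<and> j < length hs \<longrightarrow> hs ! j < length hs) \<and> QC k (mset hs) (length hs)"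
proof
  assume C: "Cond k (mset hs)"
  have "\<forall>x\<in>#mset hs. x < length hs" using C by (simp add: Cond_def)
  hence "\<forall>j. 0 \<le> j \<and> j < length hs \<longrightarrow> hs ! j < length hs" using nth_mem by fastforce
  moreover have "QC k (mset hs) (length hs)" using C by (simp add: Cond_def QC_def)
  ultimately show "(\<forall>j. 0 \<le> j \<and> j < length hs \<longrightarrow> hs ! j < length hs) \<and> QC k (mset hs) (length hs)" by simp
next
  assume a: "(\<forall>j. 0 \<le> j \<and> j < length hs \<longrightarrow> hs ! j < length hs) \<and> QC k (mset hs) (length hs)"
  have all: "\<forall>x\<in>#mset hs. x < length hs" using a by (auto simp: in_set_conv_nth)
  have z: "\<And>j. length hs \<le> j \<Longrightarrow> count (mset hs) j = 0" using all by (auto simp: count_eq_zero_iff)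
  have "\<forall>j. int (count (mset hs) j) \<le> 1 + (int k - 1) * int (above (mset hs) j)"
  proof
    fix j show "int (count (mset hs) j) \<le> 1 + (int k - 1) * int (above (mset hs) j)"
    proof (cases "j < length hs")
      case True thus ?thesis using a by (simp add: QC_def)
    next
      case False
      have "0 \<le> (int k - 1) * int (above (mset hs) j)" by (intro mult_nonneg_nonneg) (use k in auto)
      moreover have "count (mset hs) j = 0" by (rule z) (use False in simp)
      ultimately show ?thesis by linarith
    qed
  qed
  moreover have "\<forall>j. count (mset hs) (Suc j) \<le> count (mset hs) j"
  proof
    fix j show "count (mset hs) (Suc j) \<le> count (mset hs) j"
    proof (cases "j < length hs")
      case True thus ?thesis using a by (simp add: QC_def)
    next
      case False
      have "count (mset hs) (Suc j) = 0" by (rule z) (use False in simp)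
      thus ?thesis by (simp only:)
    qed
  qed
  moreover have "mset hs \<noteq> {#}" using n by auto
  ultimately show "Cond k (mset hs)" using all by (simp add: Cond_def)
qed

lemma main_good:
  assumes k: "k \<ge> 1"
  shows "good (0, input k hs) (150 + 40 * length hs) (realizable k (mset hs))"
proof (cases "length hs = 0")
  case True
  have "run Prog 1 (0, input k hs) = (136, input k hs)" using True by (simp add: run_num input_def)
  from good_run[OF this good_rej] have "good (0, input k hs) (1 + 1) False" .
  moreover have "\<not> realizable k (mset hs)"
  proof
    assume "realizable k (mset hs)"
    hence "Cond k (mset hs)" by (rule realizable_Cond)
    thus False using True by (auto simp: Cond_def)
  qed
  ultimately show ?thesis by (auto elim: good_mono good_cong)
next
  case False
  hence n: "length hs \<ge> 1" by (simp add: Suc_le_eq)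
  define n where "n = length hs"
  have chk: "good (98, m'') (6 + (15 * n + 3)) (QC k (mset hs) n)" if "KI k hs n m''" for m''
  proof -
    have e: "fst (run Prog 6 (98, m'')) = 118" and c: "CK k hs n (snd (run Prog 6 (98, m'')))"
      using count_exit[of k hs m''] that n_def by auto
    show ?thesis by (rule good_from_fst[OF e check_loop[OF c]])
  qed
  have cnt: "good (98, m') (15 * (n - 0) + 7 + (6 + (15 * n + 3)))
     ((\<forall>j. 0 \<le> j \<and> j < n \<longrightarrow> hs ! j < n) \<and> QC k (mset hs) n)" if "KI k hs 0 m'" for m'
    using count_loop[OF that, of "6 + (15 * n + 3)" "QC k (mset hs) n"] chk n_def by simp
  have e: "fst (run Prog 87 (0, input k hs)) = 87" and ci: "CI k hs 16 (snd (run Prog 87 (0, input k hs)))"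
    using prefix[OF n k] by auto
  have "good (87, snd (run Prog 87 (0, input k hs))) (7 * (length hs + 2 - 16) + 6 + (15 * (n - 0) + 7 + (6 + (15 * n + 3))))
     ((\<forall>j. 0 \<le> j \<and> j < n \<longrightarrow> hs ! j < n) \<and> QC k (mset hs) n)"
    by (rule copy_loop[OF ci]) (rule cnt)
  from good_from_fst[OF e this]
  have g: "good (0, input k hs) (87 + (7 * (length hs + 2 - 16) + 6 + (15 * (n - 0) + 7 + (6 + (15 * n + 3)))))
     ((\<forall>j. 0 \<le> j \<and> j < n \<longrightarrow> hs ! j < n) \<and> QC k (mset hs) n)" .
  have b: "87 + (7 * (length hs + 2 - 16) + 6 + (15 * (n - 0) + 7 + (6 + (15 * n + 3)))) \<le> 150 + 40 * length hs"
    using n_def by simp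
  have q: "((\<forall>j. 0 \<le> j \<and> j < n \<longrightarrow> hs ! j < n) \<and> QC k (mset hs) n) = realizable k (mset hs)"
    using Cond_iff[OF k n] realizable_iff[OF k] n_def by simp
  show ?thesis using good_mono[OF g b] q by (rule good_cong)
qed

theorem mainTheorem9:
  shows "\<exists>(P :: instr list) (c :: real). \<forall>(k :: nat) (hs :: nat list). k \<ge> 1 \<longrightarrow>
           (\<exists>t. real t \<le> c * (real (length hs) * log 2 (real (length hs) + 2) + 1)
              \<and> halted P (run P t (0, input k hs))
              \<and> (snd (run P t (0, input k hs)) 0 = 1 \<longleftrightarrow> realizable k (mset hs)))"
proof (rule exI[of _ Prog], rule exI[of _ 150], intro allI impI)
  fix k :: nat and hs :: "nat list"
  assume k: "k \<ge> 1"
  obtain t where t: "t \<le> 150 + 40 * length hs" "halted Prog (run Prog t (0, input k hs))"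
    "(snd (run Prog t (0, input k hs)) 0 = 1) = realizable k (mset hs)"
    using main_good[OF k] unfolding good_def by blast
  have lg: "1 \<le> log 2 (real (length hs) + 2)"
  proof -
    have "log 2 2 \<le> log 2 (real (length hs) + 2)" by (subst log_le_cancel_iff) auto
    thus ?thesis by simp
  qed
  have "real t \<le> 150 + 40 * real (length hs)" using t(1) by (simp add: of_nat_le_iff[symmetric])
  also have "\<dots> \<le> 150 * (real (length hs) * log 2 (real (length hs) + 2) + 1)"
  proof -
    have "real (length hs) \<le> real (length hs) * log 2 (real (length hs) + 2)"
      using lg by (simp add: mult_le_cancel_left1)
    thus ?thesis by simp
  qed
  finally show "\<exists>t. real t \<le> 150 * (real (length hs) * log 2 (real (length hs) + 2) + 1)
              \<and> halted Prog (run Prog t (0, input k hs))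
              \<and> (snd (run Prog t (0, input k hs)) 0 = 1 \<longleftrightarrow> realizable k (mset hs))"
    using t by blast
qed


end
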